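(* Every simple vigorous subgroup $G\le\operatorname{Homeo}(\mathfrak{C})$ contains a non-trivial element of finite order.
   Context: $\mathfrak{C}$ denotes a Cantor space (a space homeomorphic to $\{0,1\}^\omega$). Groups of homeomorphisms act on the right. For $\gamma\in\operatorname{Homeo}(\mathfrak{C})$, $\operatorname{supp}(\gamma)=\{p\in\mathfrak{C}: p\gamma\neq p\}$. A subset $S\subseteq \operatorname{Homeo}(\mathfrak{C})$ is vigorous if for all clopen $A,B,C\subseteq\mathfrak{C}$ with $B,C$ non-empty proper subsets of $A$ there is $\gamma\in S$ with $\operatorname{supp}(\gamma)\subseteq A$ and $B\gamma\subseteq C$. *)

theory Defs
  imports "HOL-Analysis.Analysis"
begin

definition cantor_top :: "(nat \<Rightarrow> bool) topology" where
  "cantor_top = product_topology (\<lambda>_. discrete_topology (UNIV :: bool set)) UNIV"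

definition Homeo :: "((nat \<Rightarrow> bool) \<Rightarrow> (nat \<Rightarrow> bool)) set" where
  "Homeo = {f. homeomorphic_map cantor_top cantor_top f}"

definition supp :: "('a \<Rightarrow> 'a) \<Rightarrow> 'a set" where
  "supp f = {p. f p \<noteq> p}"

definition clopen_cantor :: "(nat \<Rightarrow> bool) set \<Rightarrow> bool" where
  "clopen_cantor A \<longleftrightarrow> openin cantor_top A \<and> closedin cantor_top A"

definition vigorous :: "((nat \<Rightarrow> bool) \<Rightarrow> (nat \<Rightarrow> bool)) set \<Rightarrow> bool" where
  "vigorous S \<longleftrightarrow>
     (\<forall>A B C. clopen_cantor A \<and> clopen_cantor B \<and> clopen_cantor C
        \<and> B \<noteq> {} \<and> C \<noteq> {} \<and> B \<subset> A \<and> C \<subset> A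
        \<longrightarrow> (\<exists>\<gamma>\<in>S. supp \<gamma> \<subseteq> A \<and> \<gamma> ` B \<subseteq> C))"

text \<open>Subgroups of Homeo(C). (Right action: the product gh is h \<circ> g; closure
  under composition does not depend on this convention.)\<close>
definition homeo_subgroup :: "((nat \<Rightarrow> bool) \<Rightarrow> (nat \<Rightarrow> bool)) set \<Rightarrow> bool" where
  "homeo_subgroup G \<longleftrightarrow> G \<subseteq> Homeo \<and> id \<in> G
     \<and> (\<forall>g\<in>G. \<forall>h\<in>G. h \<circ> g \<in> G) \<and> (\<forall>g\<in>G. inv g \<in> G)"

definition normal_in :: "('a \<Rightarrow> 'a) set \<Rightarrow> ('a \<Rightarrow> 'a) set \<Rightarrow> bool" where
  "normal_in N G \<longleftrightarrow> N \<subseteq> G \<and> id \<in> N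
     \<and> (\<forall>g\<in>N. \<forall>h\<in>N. h \<circ> g \<in> N) \<and> (\<forall>g\<in>N. inv g \<in> N)
     \<and> (\<forall>g\<in>G. \<forall>n\<in>N. g \<circ> n \<circ> inv g \<in> N)"

definition simple_homeo_group :: "((nat \<Rightarrow> bool) \<Rightarrow> (nat \<Rightarrow> bool)) set \<Rightarrow> bool" where
  "simple_homeo_group G \<longleftrightarrow> homeo_subgroup G \<and> G \<noteq> {id}
     \<and> (\<forall>N. normal_in N G \<longrightarrow> N = {id} \<or> N = G)"

end

theory Submission
  imports Defs
begin

lemma topspace_cantor: "topspace cantor_top = UNIV"
  by (simp add: cantor_top_def)

lemma clopen_coord: "clopen_cantor {x. x i = b}"
proof -
  have c: "continuous_map cantor_top (discrete_topology (UNIV::bool set)) (\<lambda>x. x i)"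
    unfolding cantor_top_def by (rule continuous_map_product_projection) simp
  have "openin cantor_top {x \<in> topspace cantor_top. x i \<in> {b}}"
    by (rule openin_continuous_map_preimage[OF c]) simp
  moreover have "closedin cantor_top {x \<in> topspace cantor_top. x i \<in> {b}}"
    by (rule closedin_continuous_map_preimage[OF c]) simp
  ultimately show ?thesis unfolding clopen_cantor_def topspace_cantor by simp
qed

lemma clopen_Int: "clopen_cantor A \<Longrightarrow> clopen_cantor B \<Longrightarrow> clopen_cantor (A \<inter> B)"
  unfolding clopen_cantor_def by auto

lemma clopen_Un: "clopen_cantor A \<Longrightarrow> clopen_cantor B \<Longrightarrow> clopen_cantor (A \<union> B)"
  unfolding clopen_cantor_def by auto

lemma homeo_bij: "f \<in> Homeo \<Longrightarrow> bij f"
  unfolding Homeo_def bij_def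
  using homeomorphic_imp_surjective_map homeomorphic_imp_injective_map topspace_cantor
  by fastforce

lemma three_cycle:
  fixes f g :: "'a \<Rightarrow> 'a"
  assumes bf: "bij f" and bg: "bij g"
    and dKD: "K \<inter> D = {}" and dKF: "K \<inter> F = {}" and dDF: "D \<inter> F = {}"
    and sf: "supp f \<subseteq> K \<union> D" and sg: "supp g \<subseteq> K \<union> F"
    and fK: "f ` K \<subseteq> D" and gK: "g ` K \<subseteq> F"
  defines "t \<equiv> g \<circ> (f \<circ> (inv g \<circ> inv f))"
  shows "\<And>p. t (t (t p)) = p" and "\<And>k. k \<in> K \<Longrightarrow> t k \<noteq> k"
proof -
  have fi: "\<And>p. inv f (f p) = p" using bf by (simp add: bij_is_inj)
  have if': "\<And>p. f (inv f p) = p" using bf by (simp add: bij_is_surj surj_f_inv_f)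
  have gi: "\<And>p. inv g (g p) = p" using bg by (simp add: bij_is_inj)
  have ig: "\<And>p. g (inv g p) = p" using bg by (simp add: bij_is_surj surj_f_inv_f)
  have ffix: "\<And>p. p \<notin> K \<union> D \<Longrightarrow> f p = p" using sf unfolding supp_def by blast
  have gfix: "\<And>p. p \<notin> K \<union> F \<Longrightarrow> g p = p" using sg unfolding supp_def by blast
  have iffix: "\<And>p. p \<notin> K \<union> D \<Longrightarrow> inv f p = p" by (metis ffix fi)
  have igfix: "\<And>p. p \<notin> K \<union> F \<Longrightarrow> inv g p = p" by (metis gfix gi)
  have finKD: "\<And>p. p \<in> K \<union> D \<Longrightarrow> f p \<in> K \<union> D" by (metis ffix fi)
  have ginKF: "\<And>p. p \<in> K \<union> F \<Longrightarrow> g p \<in> K \<union> F" by (metis gfix gi)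
  have ifinKD: "\<And>p. p \<in> K \<union> D \<Longrightarrow> inv f p \<in> K \<union> D" by (metis ffix if')
  have iginKF: "\<And>p. p \<in> K \<union> F \<Longrightarrow> inv g p \<in> K \<union> F" by (metis gfix ig)
  have tK: "\<And>p. p \<in> K \<Longrightarrow> t p = g p"
  proof -
    fix p assume p: "p \<in> K"
    have "inv f p \<in> D"
    proof -
      have "inv f p \<in> K \<union> D" using ifinKD p by blast
      moreover have "inv f p \<notin> K" using fK p if' dKD by (metis disjoint_iff image_subset_iff)
      ultimately show ?thesis by blast
    qed
    hence "inv g (inv f p) = inv f p" using igfix dKD dDF by blast
    thus "t p = g p" unfolding t_def by (simp add: if')
  qed
  have tgK: "\<And>k. k \<in> K \<Longrightarrow> t (g k) = f k"
  proof -
    fix k assume k: "k \<in> K"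
    have "g k \<in> F" using gK k by blast
    hence "inv f (g k) = g k" using iffix dKF dDF by blast
    moreover have "f k \<in> D" using fK k by blast
    hence "g (f k) = f k" using gfix dKD dDF by blast
    ultimately show "t (g k) = f k" unfolding t_def by (simp add: gi)
  qed
  have tfK: "\<And>k. k \<in> K \<Longrightarrow> t (f k) = k"
  proof -
    fix k assume k: "k \<in> K"
    have "inv g k \<in> F"
    proof -
      have "inv g k \<in> K \<union> F" using iginKF k by blast
      moreover have "inv g k \<notin> K" using gK k ig dKF by (metis disjoint_iff image_subset_iff)
      ultimately show ?thesis by blast
    qed
    hence "f (inv g k) = inv g k" using ffix dKF dDF by blast
    thus "t (f k) = k" unfolding t_def by (simp add: fi ig)
  qed
  have tother: "\<And>p. p \<notin> K \<Longrightarrow> p \<notin> g ` K \<Longrightarrow> p \<notin> f ` K \<Longrightarrow> t p = p"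
  proof -
    fix p assume a: "p \<notin> K" "p \<notin> g ` K" "p \<notin> f ` K"
    show "t p = p"
    proof (cases "p \<in> D")
      case True
      have "inv f p \<in> K \<union> D" using ifinKD True by blast
      moreover have "inv f p \<notin> K" using a(3) if' by (metis image_eqI)
      ultimately have "inv f p \<in> D" by blast
      hence "inv g (inv f p) = inv f p" using igfix dKD dDF by blast
      moreover have "g p = p" using gfix True dKD dDF by blast
      ultimately show ?thesis unfolding t_def by (simp add: if')
    next
      case nD: False
      show ?thesis
      proof (cases "p \<in> F")
        case True
        have "inv f p = p" using iffix True nD a(1) by blast
        moreover have "inv g p \<in> K \<union> F" using iginKF True by blast
        moreover have "inv g p \<notin> K" using a(2) ig by (metis image_eqI)
        ultimately have "inv g p \<in> F" "inv f p = p" by blast+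
        hence "f (inv g p) = inv g p" using ffix dKF dDF by blast
        thus ?thesis unfolding t_def using \<open>inv f p = p\<close> by (simp add: ig)
      next
        case False
        thus ?thesis unfolding t_def using nD a(1) iffix igfix ffix gfix by simp
      qed
    qed
  qed
  show "\<And>p. t (t (t p)) = p"
  proof -
    fix p
    show "t (t (t p)) = p"
    proof (cases "p \<in> K")
      case True thus ?thesis by (simp add: tK tgK tfK)
    next
      case nK: False
      show ?thesis
      proof (cases "p \<in> g ` K")
        case True
        then obtain k where k: "k \<in> K" "p = g k" by blast
        thus ?thesis by (simp add: tK tgK tfK)
      next
        case nG: False
        show ?thesis
        proof (cases "p \<in> f ` K")
          case True
          then obtain k where k: "k \<in> K" "p = f k" by blast
          thus ?thesis by (simp add: tK tgK tfK)
        next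
          case False
          thus ?thesis using nK nG tother by simp
        qed
      qed
    qed
  qed
  show "\<And>k. k \<in> K \<Longrightarrow> t k \<noteq> k"
    using tK gK dKF by fastforce
qed

theorem proposition4p5:
  fixes G :: "((nat \<Rightarrow> bool) \<Rightarrow> (nat \<Rightarrow> bool)) set"
  assumes "simple_homeo_group G" and "vigorous G"
  shows "\<exists>g\<in>G. g \<noteq> id \<and> (\<exists>n>0. g ^^ n = id)"
proof -
  have grp: "homeo_subgroup G" using assms(1) simple_homeo_group_def by blast
  define K :: "(nat \<Rightarrow> bool) set" where "K = {x. x 0 = True} \<inter> {x. x 1 = True}"
  define D :: "(nat \<Rightarrow> bool) set" where "D = {x. x 0 = True} \<inter> {x. x 1 = False}"
  define F :: "(nat \<Rightarrow> bool) set" where "F = {x. x 0 = False}"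
  have cK: "clopen_cantor K" unfolding K_def by (intro clopen_Int clopen_coord)
  have cD: "clopen_cantor D" unfolding D_def by (intro clopen_Int clopen_coord)
  have cF: "clopen_cantor F" unfolding F_def by (rule clopen_coord)
  have kK: "(\<lambda>_. True) \<in> K" unfolding K_def by simp
  have kD: "(\<lambda>n. n = 0) \<in> D" unfolding D_def by simp
  have kF: "(\<lambda>_. False) \<in> F" unfolding F_def by simp
  have dKD: "K \<inter> D = {}" and dKF: "K \<inter> F = {}" and dDF: "D \<inter> F = {}"
    unfolding K_def D_def F_def by auto
  have vig: "\<And>A B C. clopen_cantor A \<Longrightarrow> clopen_cantor B \<Longrightarrow> clopen_cantor C
        \<Longrightarrow> B \<noteq> {} \<Longrightarrow> C \<noteq> {} \<Longrightarrow> B \<subset> A \<Longrightarrow> C \<subset> A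
        \<Longrightarrow> (\<exists>\<gamma>\<in>G. supp \<gamma> \<subseteq> A \<and> \<gamma> ` B \<subseteq> C)"
    using assms(2) unfolding vigorous_def by blast
  have neK: "K \<noteq> {}" using kK by blast
  have neD: "D \<noteq> {}" using kD by blast
  have neF: "F \<noteq> {}" using kF by blast
  have "K \<subset> K \<union> D" using kD dKD by blast
  moreover have "D \<subset> K \<union> D" using kK dKD by blast
  ultimately have "\<exists>\<gamma>\<in>G. supp \<gamma> \<subseteq> K \<union> D \<and> \<gamma> ` K \<subseteq> D"
    using vig[OF clopen_Un[OF cK cD] cK cD neK neD] by blast
  then obtain f where f: "f \<in> G" "supp f \<subseteq> K \<union> D" "f ` K \<subseteq> D" by blast
  have "K \<subset> K \<union> F" using kF dKF by blast
  moreover have "F \<subset> K \<union> F" using kK dKF by blast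
  ultimately have "\<exists>\<gamma>\<in>G. supp \<gamma> \<subseteq> K \<union> F \<and> \<gamma> ` K \<subseteq> F"
    using vig[OF clopen_Un[OF cK cF] cK cF neK neF] by blast
  then obtain g where g: "g \<in> G" "supp g \<subseteq> K \<union> F" "g ` K \<subseteq> F" by blast
  have GH: "G \<subseteq> Homeo" and comp: "\<forall>a\<in>G. \<forall>b\<in>G. b \<circ> a \<in> G" and inv: "\<forall>a\<in>G. inv a \<in> G"
    using grp unfolding homeo_subgroup_def by blast+
  have bf: "bij f" using f(1) GH homeo_bij by blast
  have bg: "bij g" using g(1) GH homeo_bij by blast
  define t where "t = g \<circ> (f \<circ> (inv g \<circ> inv f))"
  have "inv f \<in> G" "inv g \<in> G" using inv f(1) g(1) by auto
  hence "inv g \<circ> inv f \<in> G" using comp by blast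
  hence "f \<circ> (inv g \<circ> inv f) \<in> G" using comp f(1) by blast
  hence tG: "t \<in> G" unfolding t_def using comp g(1) by blast
  have c3: "\<And>p. t (t (t p)) = p" and nt: "\<And>k. k \<in> K \<Longrightarrow> t k \<noteq> k"
    using three_cycle[OF bf bg dKD dKF dDF f(2) g(2) f(3) g(3)] unfolding t_def by auto
  have "t \<noteq> id" using nt[OF kK] by auto
  moreover have "t ^^ 3 = id"
    by (rule ext) (simp add: numeral_3_eq_3 c3)
  ultimately show ?thesis using tG by (intro bexI[of _ t] conjI exI[of _ 3]) auto
qed

end
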